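(* Suppose $S\subseteq\mathbb{N}^{\mathbb{N}}$ is defined by a sentence $\forall x\,\exists y\,\phi$ of $\mathscr{L}_{\max}$, where $\phi$ is quantifier-free. If $S$ is countable, then $S$ is guessable.
   Context: A function $G:\mathbb{N}^{<\mathbb{N}}\to\{0,1\}$ ($\mathbb{N}^{<\mathbb{N}}$ = finite sequences of naturals) is a guesser for $S\subseteq\mathbb{N}^{\mathbb{N}}$ if for every $f:\mathbb{N}\to\mathbb{N}$ there is $m>0$ such that for all $n>m$, $G(f(0),\ldots,f(n))$ equals $1$ if $f\in S$ and $0$ if $f\notin S$; $S$ is guessable if it has a guesser. The language $\mathscr{L}_{\max}$ is a first-order language extended with ellipses: constant symbols $\mathbf{n}$ (also $\bar n$) for each $n\in\mathbb{N}$; an $n$-ary function symbol $\tilde w$ for each $w:\mathbb{N}^n\to\mathbb{N}$ ($n>0$); an $n$-ary predicate symbol $\tilde p$ for each $p\subseteq\mathbb{N}^n$ ($n>0$); an $\mathbb{N}^{<\mathbb{N}}$-ary function symbol $\tilde G$ for each $G:\mathbb{N}^{<\mathbb{N}}\to\mathbb{N}$ (applicable to any finite number of arguments); a unary function symbol $\mathbf{f}$; and a symbol $\cdots_x$ for each variable $x$. Besides the usual terms, for $\mathbb{N}^{<\mathbb{N}}$-ary $G$, terms $u,v$ and variable $x$, $G(u(\mathbf{0}),\cdots_x,u(v))$ is a term with free variables $(FV(u)\setminus\{x\})\cup FV(v)$. Formulas are built as usual. For $f:\mathbb{N}\to\mathbb{N}$, $\mathscr{M}_f$ is the structure on $\mathbb{N}$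 interpreting every symbol as the object it names and $\mathbf{f}$ as $f$; terms are evaluated as usual, plus $G(u(\mathbf{0}),\cdots_x,u(v))^{s}=G\big(u(x|\mathbf{0})^{s},\ldots,u(x|\overline{v^{s}})^{s}\big)$ under an assignment $s$, where $u(x|c)$ is substitution of the constant $c$ for $x$ in $u$. A sentence $\phi$ defines $S\subseteq\mathbb{N}^{\mathbb{N}}$ if for every $f:\mathbb{N}\to\mathbb{N}$, $\mathscr{M}_f\models\phi$ iff $f\in S$. *)

theory Defs
  imports "HOL-Library.Countable_Set"
begin

text \<open>A guesser is a map from finite sequences to {0,1}; we use bool (True = 1, False = 0).
  G guesses S if for every f there is m>0 such that for all n>m,
  G(f(0),...,f(n)) = 1 iff f is in S.\<close>

definition guesser :: "(nat list \<Rightarrow> bool) \<Rightarrow> (nat \<Rightarrow> nat) set \<Rightarrow> bool" where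
  "guesser G S \<longleftrightarrow>
     (\<forall>f. \<exists>m>0. \<forall>n>m. G (map f [0..<Suc n]) = (f \<in> S))"

definition guessable :: "(nat \<Rightarrow> nat) set \<Rightarrow> bool" where
  "guessable S \<longleftrightarrow> (\<exists>G. guesser G S)"

text \<open>Const n      : constant symbol for n
  Fn n w ts    : n-ary function symbol for w : N^n -> N (N^n encoded as lists of length n)
  GFn G ts     : N^<N-ary function symbol for G applied to finitely many arguments
  Fsym t       : the unary function symbol f
  Ell G u x v  : the ellipsis term G(u(0), ..._x, u(v))\<close>

datatype trm =
    Var nat
  | Const nat
  | Fn nat "nat list \<Rightarrow> nat" "trm list"
  | GFn "nat list \<Rightarrow> nat" "trm list"
  | Fsym trm
  | Ell "nat list \<Rightarrow> nat" trm nat trm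

datatype fm =
    FFalse
  | Eq trm trm
  | Pred nat "nat list set" "trm list"
  | Neg fm
  | Conj fm fm
  | Disj fm fm
  | Imp fm fm
  | Iff fm fm
  | All nat fm
  | Ex nat fm

fun wf_trm :: "trm \<Rightarrow> bool" where
  "wf_trm (Var x) = True"
| "wf_trm (Const n) = True"
| "wf_trm (Fn n w ts) = (n > 0 \<and> length ts = n \<and> (\<forall>t\<in>set ts. wf_trm t))"
| "wf_trm (GFn G ts) = (\<forall>t\<in>set ts. wf_trm t)"
| "wf_trm (Fsym t) = wf_trm t"
| "wf_trm (Ell G u x v) = (wf_trm u \<and> wf_trm v)"

fun wf_fm :: "fm \<Rightarrow> bool" where
  "wf_fm FFalse = True"
| "wf_fm (Eq t1 t2) = (wf_trm t1 \<and> wf_trm t2)"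
| "wf_fm (Pred n p ts) = (n > 0 \<and> length ts = n \<and> p \<subseteq> {l. length l = n} \<and> (\<forall>t\<in>set ts. wf_trm t))"
| "wf_fm (Neg a) = wf_fm a"
| "wf_fm (Conj a b) = (wf_fm a \<and> wf_fm b)"
| "wf_fm (Disj a b) = (wf_fm a \<and> wf_fm b)"
| "wf_fm (Imp a b) = (wf_fm a \<and> wf_fm b)"
| "wf_fm (Iff a b) = (wf_fm a \<and> wf_fm b)"
| "wf_fm (All x a) = wf_fm a"
| "wf_fm (Ex x a) = wf_fm a"

fun FV_trm :: "trm \<Rightarrow> nat set" where
  "FV_trm (Var x) = {x}"
| "FV_trm (Const n) = {}"
| "FV_trm (Fn n w ts) = (\<Union>t\<in>set ts. FV_trm t)"
| "FV_trm (GFn G ts) = (\<Union>t\<in>set ts. FV_trm t)"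
| "FV_trm (Fsym t) = FV_trm t"
| "FV_trm (Ell G u x v) = (FV_trm u - {x}) \<union> FV_trm v"

fun FV_fm :: "fm \<Rightarrow> nat set" where
  "FV_fm FFalse = {}"
| "FV_fm (Eq t1 t2) = FV_trm t1 \<union> FV_trm t2"
| "FV_fm (Pred n p ts) = (\<Union>t\<in>set ts. FV_trm t)"
| "FV_fm (Neg a) = FV_fm a"
| "FV_fm (Conj a b) = FV_fm a \<union> FV_fm b"
| "FV_fm (Disj a b) = FV_fm a \<union> FV_fm b"
| "FV_fm (Imp a b) = FV_fm a \<union> FV_fm b"
| "FV_fm (Iff a b) = FV_fm a \<union> FV_fm b"
| "FV_fm (All x a) = FV_fm a - {x}"
| "FV_fm (Ex x a) = FV_fm a - {x}"

fun qfree :: "fm \<Rightarrow> bool" where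
  "qfree (All x a) = False"
| "qfree (Ex x a) = False"
| "qfree (Neg a) = qfree a"
| "qfree (Conj a b) = (qfree a \<and> qfree b)"
| "qfree (Disj a b) = (qfree a \<and> qfree b)"
| "qfree (Imp a b) = (qfree a \<and> qfree b)"
| "qfree (Iff a b) = (qfree a \<and> qfree b)"
| "qfree _ = True"

text \<open>For the ellipsis term,
  the value of u(x|c) under s equals the value of u under s(x := c)
  (substitution of a constant for the free occurrences of x).\<close>

fun eval :: "(nat \<Rightarrow> nat) \<Rightarrow> (nat \<Rightarrow> nat) \<Rightarrow> trm \<Rightarrow> nat" where
  "eval f s (Var x) = s x"
| "eval f s (Const n) = n"
| "eval f s (Fn n w ts) = w (map (eval f s) ts)"
| "eval f s (GFn G ts) = G (map (eval f s) ts)"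
| "eval f s (Fsym t) = f (eval f s t)"
| "eval f s (Ell G u x v) =
     G (map (\<lambda>c. eval f (s(x := c)) u) [0..<Suc (eval f s v)])"

fun sat :: "(nat \<Rightarrow> nat) \<Rightarrow> (nat \<Rightarrow> nat) \<Rightarrow> fm \<Rightarrow> bool" where
  "sat f s FFalse = False"
| "sat f s (Eq t1 t2) = (eval f s t1 = eval f s t2)"
| "sat f s (Pred n p ts) = (map (eval f s) ts \<in> p)"
| "sat f s (Neg a) = (\<not> sat f s a)"
| "sat f s (Conj a b) = (sat f s a \<and> sat f s b)"
| "sat f s (Disj a b) = (sat f s a \<or> sat f s b)"
| "sat f s (Imp a b) = (sat f s a \<longrightarrow> sat f s b)"
| "sat f s (Iff a b) = (sat f s a \<longleftrightarrow> sat f s b)"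
| "sat f s (All x a) = (\<forall>c. sat f (s(x := c)) a)"
| "sat f s (Ex x a) = (\<exists>c. sat f (s(x := c)) a)"

definition models :: "(nat \<Rightarrow> nat) \<Rightarrow> fm \<Rightarrow> bool" where
  "models f \<phi> \<longleftrightarrow> (\<forall>s. sat f s \<phi>)"

definition sentence :: "fm \<Rightarrow> bool" where
  "sentence \<phi> \<longleftrightarrow> wf_fm \<phi> \<and> FV_fm \<phi> = {}"

definition defines_set :: "fm \<Rightarrow> (nat \<Rightarrow> nat) set \<Rightarrow> bool" where
  "defines_set \<phi> S \<longleftrightarrow> sentence \<phi> \<and> (\<forall>f. models f \<phi> \<longleftrightarrow> f \<in> S)"

end

theory Submission
  imports Defs
begin

definition cont_at :: "((nat \<Rightarrow> nat) \<Rightarrow> 'a) \<Rightarrow> (nat \<Rightarrow> nat) \<Rightarrow> bool" where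
  "cont_at F f \<longleftrightarrow> (\<exists>N. \<forall>h. (\<forall>k<N. h k = f k) \<longrightarrow> F h = F f)"

lemma cont_atE:
  assumes "cont_at F f"
  obtains N where "\<And>h. (\<forall>k<N. h k = f k) \<Longrightarrow> F h = F f"
  using assms unfolding cont_at_def by blast

lemma cont_comp:
  assumes "cont_at F f" shows "cont_at (\<lambda>h. w (F h)) f"
proof -
  obtain N where N: "\<And>h. (\<forall>k<N. h k = f k) \<Longrightarrow> F h = F f" using assms unfolding cont_at_def by blast
  show ?thesis unfolding cont_at_def
  proof (rule exI[of _ N], intro allI impI)
    fix h assume a: "\<forall>k<N. h k = f k"
    have "F h = F f" by (rule N) (rule a)
    then show "w (F h) = w (F f)" by simp
  qed
qed

lemma cont_pair:
  assumes "cont_at F f" "cont_at G f" shows "cont_at (\<lambda>h. (F h, G h)) f"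
proof -
  obtain N1 where N1: "\<And>h. (\<forall>k<N1. h k = f k) \<Longrightarrow> F h = F f" using assms(1) unfolding cont_at_def by blast
  obtain N2 where N2: "\<And>h. (\<forall>k<N2. h k = f k) \<Longrightarrow> G h = G f" using assms(2) unfolding cont_at_def by blast
  show ?thesis unfolding cont_at_def
  proof (rule exI[of _ "max N1 N2"], intro allI impI)
    fix h assume a: "\<forall>k<max N1 N2. h k = f k"
    have "F h = F f" by (rule N1) (use a in simp)
    moreover have "G h = G f" by (rule N2) (use a in simp)
    ultimately show "(F h, G h) = (F f, G f)" by simp
  qed
qed

lemma cont_const: "cont_at (\<lambda>h. c) f"
  unfolding cont_at_def by simp

lemma cont_list:
  "(\<And>t. t \<in> set ts \<Longrightarrow> cont_at (F t) f) \<Longrightarrow> cont_at (\<lambda>h. map (\<lambda>t. F t h) ts) f"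
proof (induction ts)
  case Nil
  then show ?case by (simp add: cont_at_def)
next
  case (Cons a ts)
  have ca: "cont_at (F a) f" using Cons.prems by simp
  have ct: "cont_at (\<lambda>h. map (\<lambda>t. F t h) ts) f" by (rule Cons.IH) (rule Cons.prems, simp)
  have "cont_at (\<lambda>h. (F a h, map (\<lambda>t. F t h) ts)) f" by (rule cont_pair[OF _ ct]) (use ca in \<open>simp add: cont_at_def\<close>)
  from cont_comp[OF this, of "\<lambda>p. fst p # snd p"] show ?case by simp
qed

lemma eval_cont: "cont_at (\<lambda>h. eval h s t) f"
proof (induction t arbitrary: s)
  case (Var x)
  then show ?case by (simp add: cont_at_def)
next
  case (Const x)
  then show ?case by (simp add: cont_at_def)
next
  case (Fn n w ts)
  have "cont_at (\<lambda>h. map (\<lambda>t. eval h s t) ts) f"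
    by (rule cont_list, rule Fn.IH)
  from cont_comp[OF this, of w] show ?case by simp
next
  case (GFn G ts)
  have "cont_at (\<lambda>h. map (\<lambda>t. eval h s t) ts) f"
    by (rule cont_list, rule GFn.IH)
  from cont_comp[OF this, of G] show ?case by simp
next
  case (Fsym t)
  have ct: "cont_at (\<lambda>h. eval h s t) f" by (rule Fsym.IH)
  obtain N1 where N1: "\<And>h. (\<forall>k<N1. h k = f k) \<Longrightarrow> eval h s t = eval f s t"
    using ct unfolding cont_at_def by blast
  show ?case unfolding cont_at_def
  proof (rule exI[of _ "max N1 (Suc (eval f s t))"], intro allI impI)
    fix h assume a: "\<forall>k<max N1 (Suc (eval f s t)). h k = f k"
    have e: "eval h s t = eval f s t" by (rule N1) (use a in simp)
    have "h (eval f s t) = f (eval f s t)" using a by simp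
    then show "eval h s (Fsym t) = eval f s (Fsym t)" using e by simp
  qed
next
  case (Ell G u x v)
  have cv: "cont_at (\<lambda>h. eval h s v) f" by (rule Ell.IH(2))
  obtain N1 where N1: "\<And>h. (\<forall>k<N1. h k = f k) \<Longrightarrow> eval h s v = eval f s v"
    using cv unfolding cont_at_def by blast
  have "cont_at (\<lambda>h. map (\<lambda>c. eval h (s(x := c)) u) [0..<Suc (eval f s v)]) f"
    by (rule cont_list, rule Ell.IH(1))
  then obtain N2 where N2: "\<And>h. (\<forall>k<N2. h k = f k) \<Longrightarrow>
     map (\<lambda>c. eval h (s(x := c)) u) [0..<Suc (eval f s v)] = map (\<lambda>c. eval f (s(x := c)) u) [0..<Suc (eval f s v)]"
    unfolding cont_at_def by blast
  show ?case unfolding cont_at_def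
  proof (rule exI[of _ "max N1 N2"], intro allI impI)
    fix h assume a: "\<forall>k<max N1 N2. h k = f k"
    have e: "eval h s v = eval f s v" by (rule N1) (use a in simp)
    have m: "map (\<lambda>c. eval h (s(x := c)) u) [0..<Suc (eval f s v)] = map (\<lambda>c. eval f (s(x := c)) u) [0..<Suc (eval f s v)]"
      by (rule N2) (use a in simp)
    show "eval h s (Ell G u x v) = eval f s (Ell G u x v)"
      unfolding eval.simps e m ..
  qed
qed

lemma sat_cont: "qfree \<phi> \<Longrightarrow> cont_at (\<lambda>h. sat h s \<phi>) f"
proof (induction \<phi>)
  case FFalse
  then show ?case by (simp add: cont_at_def)
next
  case (Eq t1 t2)
  have "cont_at (\<lambda>h. (eval h s t1, eval h s t2)) f" by (rule cont_pair; rule eval_cont)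
  from cont_comp[OF this, of "\<lambda>p. fst p = snd p"] show ?case by simp
next
  case (Pred n p ts)
  have "cont_at (\<lambda>h. map (\<lambda>t. eval h s t) ts) f"
    by (rule cont_list, rule eval_cont)
  from cont_comp[OF this, of "\<lambda>l. l \<in> p"] show ?case by simp
next
  case (Neg a)
  have "cont_at (\<lambda>h. sat h s a) f" using Neg.IH Neg.prems by simp
  from cont_comp[OF this, of Not] show ?case by simp
next
  case (Conj a b)
  have "cont_at (\<lambda>h. (sat h s a, sat h s b)) f"
    by (rule cont_pair) (use Conj.IH Conj.prems in simp_all)
  from cont_comp[OF this, of "\<lambda>p. fst p \<and> snd p"] show ?case by simp
next
  case (Disj a b)
  have "cont_at (\<lambda>h. (sat h s a, sat h s b)) f"
    by (rule cont_pair) (use Disj.IH Disj.prems in simp_all)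
  from cont_comp[OF this, of "\<lambda>p. fst p \<or> snd p"] show ?case by simp
next
  case (Imp a b)
  have "cont_at (\<lambda>h. (sat h s a, sat h s b)) f"
    by (rule cont_pair) (use Imp.IH Imp.prems in simp_all)
  from cont_comp[OF this, of "\<lambda>p. fst p \<longrightarrow> snd p"] show ?case by simp
next
  case (Iff a b)
  have "cont_at (\<lambda>h. (sat h s a, sat h s b)) f"
    by (rule cont_pair) (use Iff.IH Iff.prems in simp_all)
  from cont_comp[OF this, of "\<lambda>p. fst p = snd p"] show ?case by simp
next
  case (All x1 \<phi>)
  then show ?case by simp
next
  case (Ex x1 \<phi>)
  then show ?case by simp
qed

lemma eval_FV: "(\<forall>v\<in>FV_trm t. s v = s' v) \<Longrightarrow> eval f s t = eval f s' t"
proof (induction t arbitrary: s s')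
  case (Fn n w ts)
  have "map (eval f s) ts = map (eval f s') ts"
    by (rule map_cong) (use Fn in auto)
  then show ?case unfolding eval.simps by (rule arg_cong)
next
  case (GFn G ts)
  have "map (eval f s) ts = map (eval f s') ts"
    by (rule map_cong) (use GFn in auto)
  then show ?case unfolding eval.simps by (rule arg_cong)
next
  case (Ell G u x v)
  then have "eval f s v = eval f s' v" by auto
  moreover have "\<And>c. eval f (s(x := c)) u = eval f (s'(x := c)) u"
    using Ell by auto
  ultimately show ?case by simp
next
  case (Fsym t)
  then have "eval f s t = eval f s' t" by simp
  then show ?case by simp
qed auto

lemma sat_FV: "(\<forall>v\<in>FV_fm \<phi>. s v = s' v) \<Longrightarrow> sat f s \<phi> = sat f s' \<phi>"
proof (induction \<phi> arbitrary: s s')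
  case (Eq t1 t2)
  then show ?case using eval_FV[of t1 s s' f] eval_FV[of t2 s s' f] by auto
next
  case (Pred n p ts)
  then have "map (eval f s) ts = map (eval f s') ts"
    by (auto intro!: map_cong eval_FV)
  then show ?case unfolding sat.simps by (rule arg_cong)
next
  case (All x a)
  have "\<And>c. sat f (s(x := c)) a = sat f (s'(x := c)) a"
    using All by auto
  then show ?case by simp
next
  case (Ex x a)
  have "\<And>c. sat f (s(x := c)) a = sat f (s'(x := c)) a"
    using Ex by auto
  then show ?case by simp
next
  case (Neg a)
  then have "sat f s a = sat f s' a" by simp
  then show ?case by simp
next
  case (Conj a b)
  then have "sat f s a = sat f s' a" "sat f s b = sat f s' b" by simp_all
  then show ?case by simp
next
  case (Disj a b)
  then have "sat f s a = sat f s' a" "sat f s b = sat f s' b" by simp_all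
  then show ?case by simp
next
  case (Imp a b)
  then have "sat f s a = sat f s' a" "sat f s b = sat f s' b" by simp_all
  then show ?case by simp
next
  case (Iff a b)
  then have "sat f s a = sat f s' a" "sat f s b = sat f s' b" by simp_all
  then show ?case by simp
qed auto

lemma finite_bound:
  fixes i :: nat and P :: "nat \<Rightarrow> nat \<Rightarrow> bool"
  assumes "\<And>a. a < i \<Longrightarrow> \<exists>N. \<forall>n\<ge>N. P a n"
  shows "\<exists>M. \<forall>a<i. \<forall>n\<ge>M. P a n"
  using assms
proof (induction i)
  case 0
  then show ?case by simp
next
  case (Suc i)
  then obtain M where M: "\<forall>a<i. \<forall>n\<ge>M. P a n" by auto
  obtain N where N: "\<forall>n\<ge>N. P i n" using Suc.prems[of i] by auto
  show ?case
  proof (rule exI[of _ "max M N"], intro allI impI)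
    fix a n assume "a < Suc i" "max M N \<le> n"
    show "P a n"
    proof (cases "a = i")
      case True
      have "N \<le> n" using \<open>max M N \<le> n\<close> by simp
      then show ?thesis using N True by blast
    next
      case False
      then have "a < i" using \<open>a < Suc i\<close> by auto
      then show ?thesis using M \<open>max M N \<le> n\<close> by auto
    qed
  qed
qed

theorem lemma4p8:
  fixes S :: "(nat \<Rightarrow> nat) set" and x y :: nat and \<phi> :: fm
  assumes "qfree \<phi>"
    and "defines_set (All x (Ex y \<phi>)) S"
    and "countable S"
  shows "guessable S"
proof -
  define s0 :: "nat \<Rightarrow> nat" where "s0 = (\<lambda>_. 0)"
  define sa where "sa = (\<lambda>a b. s0(x := a, y := b))"
  have sent: "sentence (All x (Ex y \<phi>))" and md: "\<And>f. models f (All x (Ex y \<phi>)) \<longleftrightarrow> f \<in> S"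
    using assms(2) unfolding defines_set_def by auto
  have FV: "FV_fm \<phi> \<subseteq> {x, y}" using sent unfolding sentence_def by auto
  have memS: "f \<in> S \<longleftrightarrow> (\<forall>a. \<exists>b. sat f (sa a b) \<phi>)" for f
  proof -
    have "\<And>s a b. sat f (s(x:=a, y:=b)) \<phi> = sat f (sa a b) \<phi>"
      by (rule sat_FV) (use FV in \<open>auto simp: sa_def\<close>)
    then show "f \<in> S \<longleftrightarrow> (\<forall>a. \<exists>b. sat f (sa a b) \<phi>)"
      unfolding md[symmetric] models_def by simp
  qed
  have cont: "\<And>f a b. \<exists>N. \<forall>h. (\<forall>k<N. h k = f k) \<longrightarrow> sat h (sa a b) \<phi> = sat f (sa a b) \<phi>"
    using sat_cont[OF assms(1)] unfolding cont_at_def by blast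
  define ok where "ok = (\<lambda>g n a. \<exists>b. \<forall>h. (\<forall>k<n. h k = g k) \<longrightarrow> sat h (sa a b) \<phi>)"
  show ?thesis
  proof (cases "S = {}")
    case True
    then show ?thesis unfolding guessable_def guesser_def
      by (intro exI[of _ "\<lambda>_. False"]) auto
  next
    case False
    define g where "g = from_nat_into S"
    have rg: "range g = S" using range_from_nat_into[OF False assms(3)] g_def by simp
    define G where "G = (\<lambda>\<sigma>. \<exists>i \<le> length \<sigma>. map (g i) [0..<length \<sigma>] = \<sigma> \<and> (\<forall>a\<le>i. ok (g i) (length \<sigma>) a))"
    have "guesser G S" unfolding guesser_def
    proof
      fix f
      show "\<exists>m>0. \<forall>n>m. G (map f [0..<Suc n]) = (f \<in> S)"
      proof (cases "f \<in> S")
        case True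
        then obtain i0 where fi: "f = g i0" using rg by auto
        have "\<exists>M. \<forall>a<Suc i0. \<forall>n\<ge>M. ok f n a"
        proof (rule finite_bound)
          fix a assume "a < Suc i0"
          obtain b where b: "sat f (sa a b) \<phi>" using True memS by blast
          obtain N where N: "\<forall>h. (\<forall>k<N. h k = f k) \<longrightarrow> sat h (sa a b) \<phi> = sat f (sa a b) \<phi>"
            using cont by blast
          show "\<exists>N. \<forall>n\<ge>N. ok f n a"
          proof (rule exI[of _ N], intro allI impI)
            fix n assume "N \<le> n"
            then show "ok f n a" unfolding ok_def using N b by (intro exI[of _ b]) auto
          qed
        qed
        then obtain M where M: "\<forall>a<Suc i0. \<forall>n\<ge>M. ok f n a" by blast
        show ?thesis
        proof (rule exI[of _ "Suc (M + i0)"], intro conjI allI impI)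
          fix n assume n: "Suc (M+i0) < n"
          have "G (map f [0..<Suc n])" unfolding G_def
          proof (rule exI[of _ i0], intro conjI allI impI)
            show "i0 \<le> length (map f [0..<Suc n])" using n by simp
            show "map (g i0) [0..<length (map f [0..<Suc n])] = map f [0..<Suc n]" using fi by simp
            fix a assume "a \<le> i0"
            then show "ok (g i0) (length (map f [0..<Suc n])) a" using M n fi by auto
          qed
          then show "G (map f [0..<Suc n]) = (f \<in> S)" using True by simp
        qed simp
      next
        case False
        obtain a0 where a0: "\<forall>b. \<not> sat f (sa a0 b) \<phi>" using False memS by blast
        have "\<exists>M. \<forall>i<a0. \<forall>n\<ge>M. map (g i) [0..<Suc n] \<noteq> map f [0..<Suc n]"
        proof (rule finite_bound)
          fix i assume "i < a0"
          have "g i \<noteq> f" using False rg by auto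
          then obtain k where k: "g i k \<noteq> f k" by auto
          show "\<exists>N. \<forall>n\<ge>N. map (g i) [0..<Suc n] \<noteq> map f [0..<Suc n]"
          proof (rule exI[of _ k], intro allI impI)
            fix n assume "k \<le> n"
            then have "map (g i) [0..<Suc n] ! k \<noteq> map f [0..<Suc n] ! k" using k
              by (simp add: nth_map del: upt_Suc)
            then show "map (g i) [0..<Suc n] \<noteq> map f [0..<Suc n]" by metis
          qed
        qed
        then obtain M where M: "\<forall>i<a0. \<forall>n\<ge>M. map (g i) [0..<Suc n] \<noteq> map f [0..<Suc n]" by blast
        show ?thesis
        proof (rule exI[of _ "Suc M"], intro conjI allI impI)
          fix n assume n: "Suc M < n"
          have "\<not> G (map f [0..<Suc n])"
          proof
            assume "G (map f [0..<Suc n])"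
            then obtain i where i: "i \<le> Suc n" "map (g i) [0..<Suc n] = map f [0..<Suc n]"
              "\<forall>a\<le>i. ok (g i) (Suc n) a"
              unfolding G_def by auto
            show False
            proof (cases "i < a0")
              case True
              have "Suc M < n" by (rule n)
              then have "M \<le> n" by simp
              then show False using M[rule_format, OF True, of n] i(2) by simp
            next
              case False
              then have "ok (g i) (Suc n) a0" using i by auto
              then obtain b where b: "\<forall>h. (\<forall>k<Suc n. h k = g i k) \<longrightarrow> sat h (sa a0 b) \<phi>"
                unfolding ok_def by blast
              have "\<forall>k<Suc n. f k = g i k" using i(2)
                by (simp del: upt_Suc add: map_eq_conv)
              then have "sat f (sa a0 b) \<phi>" using b[rule_format, of f] by blast
              then show False using a0 by blast
            qed
          qed
          then show "G (map f [0..<Suc n]) = (f \<in> S)" using False by simp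
        qed simp
      qed
    qed
    then show ?thesis unfolding guessable_def by blast
  qed
qed

end
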